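(* Let \(X\) be a nonempty set and let \(\Phi\) be a mapping with domain \(X^{2}\). Then the following conditions are equivalent. (i) There is a totally ordered set \(Q\) such that \(\Phi\) is combinatorially similar to a \(Q\)-ultrametric. (ii) There is a poset \(Q\) such that \(\Phi\) is combinatorially similar to a \(Q\)-ultrametric. (iii) \(\Phi\) is symmetric, the transitive closure \(u_{\Phi}^{t}\) of \(u_{\Phi}\) is antisymmetric, there is \(a_0 \in \Phi(X^{2})\) with \(\Phi^{-1}(a_0) = \Delta_{X}:=\{\langle x,x\rangle:x\in X\}\), and for every triple \(\langle x_1, x_2, x_3\rangle\) of points of \(X\) there is a permutation \((i_1,i_2,i_3)\) of \((1,2,3)\) such that \(\Phi(x_{i_1}, x_{i_2}) = \Phi(x_{i_2}, x_{i_3})\). (iv) There is \(b_0 \in \Phi(X^{2})\) such that \(\Phi^{-1}(b_0) = \Delta_{X}\), the binary relation \(\preccurlyeq_{\Phi} := u_{\Phi}^{t} \cup \Delta_{\Phi(X^{2})}\) is a partial order on \(\Phi(X^{2})\), \(b_0\) is the smallest element of \((\Phi(X^{2}), \preccurlyeq_{\Phi})\), and \(\Phi\) is a \(\preccurlyeq_{\Phi}\)-ultrametric on \(X\).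
   Context: For a mapping \(F\) with domain \(A\), \(F(A)\) denotes its range; \(\Delta_S=\{\langle s,s\rangle: s\in S\}\). Let \((Q,\preccurlyeq_Q)\) be a poset with a smallest element \(q_0\) and \(Z\) a nonempty set. A mapping \(d\colon Z^2\to Q\) is a \(Q\)-pseudoultrametric (= \(\preccurlyeq_Q\)-pseudoultrametric) if \(d\) is symmetric, \(d(z,z)=q_0\) for all \(z\in Z\), and for every triple \(\langle z_1,z_2,z_3\rangle\) of points of \(Z\) there is a permutation \((i_1,i_2,i_3)\) of \((1,2,3)\) with \(d(z_{i_1},z_{i_3})\preccurlyeq_Q d(z_{i_1},z_{i_2})\) and \(d(z_{i_1},z_{i_2})=d(z_{i_2},z_{i_3})\); it is a \(Q\)-ultrametric (= \(\preccurlyeq_Q\)-ultrametric) if moreover \(d(x,y)=q_0\) iff \(x=y\). For nonempty sets \(X,Y\) and mappings \(\Phi\) with domain \(X^2\), \(\Psi\) with domain \(Y^2\), \(\Phi\) is combinatorially similar to \(\Psi\) if there are bijections \(f\colon \Phi(X^2)\to\Psi(Y^2)\) and \(g\colon Y\to X\) with \(\Psi(x,y)=f(\Phi(g(x),g(y)))\) for all \(x,y\in Y\). For \(\Phi\) with domain \(X^2\) and \(Y=\Phi(X^2)\), \(\langle y_1,y_2\rangle\in u_\Phi\) iff \(y_1,y_2\in Y\) and there are \(x_1,x_2,x_3\in X\) with \(y_1=\Phi(x_1,x_3)\) and \(y_2=\Phi(x_1,x_2)=\Phi(x_2,x_3)\). The transitive closure is \(\gamma^t=\bigcup_{n\ge1}\gamma^n\)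 with \(\gamma^{n+1}=\gamma^n\circ\gamma\), where \(\langle x,y\rangle\in\alpha\circ\beta\) iff there is \(z\) with \(\langle x,z\rangle\in\alpha\), \(\langle z,y\rangle\in\beta\). *)

theory Defs
  imports Main
begin

text \<open>Range of a mapping with domain X^2 (only values on X x X matter).\<close>
definition img2 :: "'a set \<Rightarrow> ('a \<Rightarrow> 'a \<Rightarrow> 'b) \<Rightarrow> 'b set" where
  "img2 X \<Phi> = (\<lambda>(x, y). \<Phi> x y) ` (X \<times> X)"

definition some_perm :: "('a \<Rightarrow> 'a \<Rightarrow> 'a \<Rightarrow> bool) \<Rightarrow> 'a \<Rightarrow> 'a \<Rightarrow> 'a \<Rightarrow> bool" where
  "some_perm P z1 z2 z3 \<longleftrightarrow>
     P z1 z2 z3 \<or> P z1 z3 z2 \<or> P z2 z1 z3 \<or> P z2 z3 z1 \<or> P z3 z1 z2 \<or> P z3 z2 z1"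

text \<open>Q-pseudoultrametric d on Z, where Q is ordered by le (a set of pairs) and q0 is the
  smallest element of Q.\<close>
definition is_pseudoultrametric ::
    "'c set \<Rightarrow> ('c \<times> 'c) set \<Rightarrow> 'c \<Rightarrow> 'd set \<Rightarrow> ('d \<Rightarrow> 'd \<Rightarrow> 'c) \<Rightarrow> bool" where
  "is_pseudoultrametric Q le q0 Z d \<longleftrightarrow>
     Z \<noteq> {} \<and>
     (\<forall>x\<in>Z. \<forall>y\<in>Z. d x y \<in> Q) \<and>
     (\<forall>x\<in>Z. \<forall>y\<in>Z. d x y = d y x) \<and>
     (\<forall>z\<in>Z. d z z = q0) \<and>
     (\<forall>z1\<in>Z. \<forall>z2\<in>Z. \<forall>z3\<in>Z.
        some_perm (\<lambda>a b c. (d a c, d a b) \<in> le \<and> d a b = d b c) z1 z2 z3)"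

definition is_ultrametric ::
    "'c set \<Rightarrow> ('c \<times> 'c) set \<Rightarrow> 'c \<Rightarrow> 'd set \<Rightarrow> ('d \<Rightarrow> 'd \<Rightarrow> 'c) \<Rightarrow> bool" where
  "is_ultrametric Q le q0 Z d \<longleftrightarrow>
     is_pseudoultrametric Q le q0 Z d \<and> (\<forall>x\<in>Z. \<forall>y\<in>Z. d x y = q0 \<longleftrightarrow> x = y)"

definition comb_similar ::
    "'a set \<Rightarrow> ('a \<Rightarrow> 'a \<Rightarrow> 'b) \<Rightarrow> 'd set \<Rightarrow> ('d \<Rightarrow> 'd \<Rightarrow> 'c) \<Rightarrow> bool" where
  "comb_similar X \<Phi> Y \<Psi> \<longleftrightarrow>
     (\<exists>f g. bij_betw f (img2 X \<Phi>) (img2 Y \<Psi>) \<and> bij_betw g Y X \<and>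
        (\<forall>x\<in>Y. \<forall>y\<in>Y. \<Psi> x y = f (\<Phi> (g x) (g y))))"

definition sim_to_Q_ultrametric ::
    "'a set \<Rightarrow> ('a \<Rightarrow> 'a \<Rightarrow> 'b) \<Rightarrow> 'c set \<Rightarrow> ('c \<times> 'c) set \<Rightarrow> 'c \<Rightarrow> 'd set
     \<Rightarrow> ('d \<Rightarrow> 'd \<Rightarrow> 'c) \<Rightarrow> bool" where
  "sim_to_Q_ultrametric X \<Phi> Q le q0 Y d \<longleftrightarrow>
     q0 \<in> Q \<and> (\<forall>q\<in>Q. (q0, q) \<in> le) \<and>
     is_ultrametric Q le q0 Y d \<and> comb_similar X \<Phi> Y d"

definition u_rel :: "'a set \<Rightarrow> ('a \<Rightarrow> 'a \<Rightarrow> 'b) \<Rightarrow> ('b \<times> 'b) set" where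
  "u_rel X \<Phi> = {(y1, y2). y1 \<in> img2 X \<Phi> \<and> y2 \<in> img2 X \<Phi> \<and>
     (\<exists>x1\<in>X. \<exists>x2\<in>X. \<exists>x3\<in>X. y1 = \<Phi> x1 x3 \<and> y2 = \<Phi> x1 x2 \<and> y2 = \<Phi> x2 x3)}"

definition preimage_is_diag :: "'a set \<Rightarrow> ('a \<Rightarrow> 'a \<Rightarrow> 'b) \<Rightarrow> 'b \<Rightarrow> bool" where
  "preimage_is_diag X \<Phi> a \<longleftrightarrow> {(x, y). x \<in> X \<and> y \<in> X \<and> \<Phi> x y = a} = Id_on X"

definition cond_iii :: "'a set \<Rightarrow> ('a \<Rightarrow> 'a \<Rightarrow> 'b) \<Rightarrow> bool" where
  "cond_iii X \<Phi> \<longleftrightarrow>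
     (\<forall>x\<in>X. \<forall>y\<in>X. \<Phi> x y = \<Phi> y x) \<and>
     antisym ((u_rel X \<Phi>)\<^sup>+) \<and>
     (\<exists>a0\<in>img2 X \<Phi>. preimage_is_diag X \<Phi> a0) \<and>
     (\<forall>x1\<in>X. \<forall>x2\<in>X. \<forall>x3\<in>X. some_perm (\<lambda>a b c. \<Phi> a b = \<Phi> b c) x1 x2 x3)"

definition le_Phi :: "'a set \<Rightarrow> ('a \<Rightarrow> 'a \<Rightarrow> 'b) \<Rightarrow> ('b \<times> 'b) set" where
  "le_Phi X \<Phi> = (u_rel X \<Phi>)\<^sup>+ \<union> Id_on (img2 X \<Phi>)"

definition cond_iv :: "'a set \<Rightarrow> ('a \<Rightarrow> 'a \<Rightarrow> 'b) \<Rightarrow> bool" where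
  "cond_iv X \<Phi> \<longleftrightarrow>
     (\<exists>b0\<in>img2 X \<Phi>. preimage_is_diag X \<Phi> b0 \<and>
        partial_order_on (img2 X \<Phi>) (le_Phi X \<Phi>) \<and>
        (\<forall>y\<in>img2 X \<Phi>. (b0, y) \<in> le_Phi X \<Phi>) \<and>
        is_ultrametric (img2 X \<Phi>) (le_Phi X \<Phi>) b0 X \<Phi>)"

end

theory Submission
  imports Defs
begin

lemma some_perm_mono:
  assumes "some_perm P x1 x2 x3"
    and "\<And>a b c. a\<in>{x1,x2,x3} \<Longrightarrow> b\<in>{x1,x2,x3} \<Longrightarrow> c\<in>{x1,x2,x3} \<Longrightarrow> P a b c \<Longrightarrow> R a b c"
  shows "some_perm R x1 x2 x3"
  using assms unfolding some_perm_def by blast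

lemma some_perm_map:
  assumes "some_perm P (h x1) (h x2) (h x3)"
    and "\<And>a b c. a\<in>{x1,x2,x3} \<Longrightarrow> b\<in>{x1,x2,x3} \<Longrightarrow> c\<in>{x1,x2,x3} \<Longrightarrow> P (h a) (h b) (h c) \<Longrightarrow> R a b c"
  shows "some_perm R x1 x2 x3"
  using assms unfolding some_perm_def by blast

lemma szpilrajn:
  assumes po: "partial_order_on A P"
  shows "\<exists>L. linear_order_on A L \<and> P \<subseteq> L"
proof -
  define S where "S = {R. partial_order_on A R \<and> P \<subseteq> R}"
  have "\<forall>C\<in>chains S. \<exists>U\<in>S. \<forall>X\<in>C. X \<subseteq> U"
  proof
    fix C assume C: "C \<in> chains S"
    show "\<exists>U\<in>S. \<forall>X\<in>C. X \<subseteq> U"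
    proof (cases "C = {}")
      case True then show ?thesis using po by (auto simp: S_def)
    next
      case False
      have CS: "C \<subseteq> S" using C by (rule chainsD2)
      have "partial_order_on A (\<Union>C)"
        unfolding partial_order_on_def preorder_on_def
      proof (intro conjI)
        show "\<Union>C \<subseteq> A \<times> A" using CS by (auto simp: S_def partial_order_on_def preorder_on_def)
        show "refl_on A (\<Union>C)" using CS False
          unfolding S_def partial_order_on_def preorder_on_def refl_on_def by blast
        show "trans (\<Union>C)"
        proof (rule transI)
          fix x y z assume "(x,y) \<in> \<Union>C" "(y,z) \<in> \<Union>C"
          then obtain R1 R2 where R: "R1\<in>C" "R2\<in>C" "(x,y)\<in>R1" "(y,z)\<in>R2" by blast
          from chainsD[OF C R(1,2)] show "(x,z) \<in> \<Union>C"
          proof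
            assume "R1 \<subseteq> R2" then have "trans R2" "(x,y)\<in>R2" using R CS
              by (auto simp: S_def partial_order_on_def preorder_on_def)
            then show ?thesis using R by (meson UnionI transD)
          next
            assume "R2 \<subseteq> R1" then have "trans R1" "(y,z)\<in>R1" using R CS
              by (auto simp: S_def partial_order_on_def preorder_on_def)
            then show ?thesis using R by (meson UnionI transD)
          qed
        qed
        show "antisym (\<Union>C)"
        proof (rule antisymI)
          fix x y assume "(x,y) \<in> \<Union>C" "(y,x) \<in> \<Union>C"
          then obtain R1 R2 where R: "R1\<in>C" "R2\<in>C" "(x,y)\<in>R1" "(y,x)\<in>R2" by blast
          from chainsD[OF C R(1,2)] show "x = y"
          proof
            assume "R1 \<subseteq> R2" then have "antisym R2" "(x,y)\<in>R2" using R CS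
              by (auto simp: S_def partial_order_on_def preorder_on_def)
            then show ?thesis using R by (meson antisymD)
          next
            assume "R2 \<subseteq> R1" then have "antisym R1" "(y,x)\<in>R1" using R CS
              by (auto simp: S_def partial_order_on_def preorder_on_def)
            then show ?thesis using R by (meson antisymD)
          qed
        qed
      qed
      moreover have "P \<subseteq> \<Union>C" using False CS by (auto simp: S_def)
      ultimately show ?thesis by (auto simp: S_def)
    qed
  qed
  from Zorn_Lemma2[OF this] obtain M where M: "M \<in> S" and max: "\<forall>X\<in>S. M \<subseteq> X \<longrightarrow> X = M"
    by blast
  have Mpo: "partial_order_on A M" and PM: "P \<subseteq> M" using M by (auto simp: S_def)
  have MA: "M \<subseteq> A \<times> A" and Mr: "refl_on A M" and Mt: "trans M" and Ma: "antisym M"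
    using partial_order_onD[OF Mpo] by auto
  have "total_on A M"
    unfolding total_on_def
  proof (intro ballI impI)
    fix a b assume ab: "a \<in> A" "b \<in> A" "a \<noteq> b"
    show "(a,b) \<in> M \<or> (b,a) \<in> M"
    proof (rule ccontr)
      assume nab: "\<not> ((a,b) \<in> M \<or> (b,a) \<in> M)"
      define M' where "M' = M \<union> {(x,y). (x,a) \<in> M \<and> (b,y) \<in> M}"
      have "partial_order_on A M'"
        unfolding partial_order_on_def preorder_on_def
      proof (intro conjI)
        show "M' \<subseteq> A \<times> A" using MA by (auto simp: M'_def)
        show "refl_on A M'" using Mr by (auto simp: M'_def refl_on_def)
        show "trans M'"
          unfolding trans_def M'_def using Mt nab
          by (auto dest: transD[OF Mt])
        show "antisym M'"
          unfolding antisym_def M'_def using nab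
          by (auto dest: transD[OF Mt] antisymD[OF Ma])
      qed
      then have "M' \<in> S" using PM by (auto simp: S_def M'_def)
      moreover have "M \<subseteq> M'" by (auto simp: M'_def)
      ultimately have "M' = M" using max by blast
      moreover have "(a,b) \<in> M'" using Mr ab by (auto simp: M'_def refl_on_def)
      ultimately show False using nab by blast
    qed
  qed
  then show ?thesis using Mpo PM by (auto simp: linear_order_on_def)
qed



lemma img2I: "x \<in> X \<Longrightarrow> y \<in> X \<Longrightarrow> \<Phi> x y \<in> img2 X \<Phi>"
  unfolding img2_def by force

lemma img2E: "p \<in> img2 X \<Phi> \<Longrightarrow> (\<And>x y. x \<in> X \<Longrightarrow> y \<in> X \<Longrightarrow> p = \<Phi> x y \<Longrightarrow> R) \<Longrightarrow> R"
  unfolding img2_def by force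

lemma u_rel_sub: "u_rel X \<Phi> \<subseteq> img2 X \<Phi> \<times> img2 X \<Phi>"
  unfolding u_rel_def by auto

lemma ultra_iso:
  assumes "is_ultrametric Q le q0 Y d" "refl_on Q le"
    and y: "y1 \<in> Y" "y2 \<in> Y" "y3 \<in> Y" and eq: "d y1 y2 = d y2 y3"
  shows "(d y1 y3, d y1 y2) \<in> le"
proof -
  have sym: "\<forall>x\<in>Y. \<forall>y\<in>Y. d x y = d y x" and inQ: "\<forall>x\<in>Y. \<forall>y\<in>Y. d x y \<in> Q"
    and sp: "some_perm (\<lambda>a b c. (d a c, d a b) \<in> le \<and> d a b = d b c) y1 y2 y3"
    using assms unfolding is_ultrametric_def is_pseudoultrametric_def by auto
  have r: "\<And>q. q \<in> Q \<Longrightarrow> (q,q) \<in> le" using assms(2) unfolding refl_on_def by auto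
  have q13: "d y1 y3 \<in> Q" using inQ y by auto
  show ?thesis using sp unfolding some_perm_def
  proof (elim disjE conjE)
  qed (use sym y eq r q13 in \<open>simp_all\<close>)
qed

lemma ii_iii:
  assumes po: "partial_order_on Q le" and sim: "sim_to_Q_ultrametric X \<Phi> Q le q0 Y d"
  shows "cond_iii X \<Phi>"
proof -
  have um: "is_ultrametric Q le q0 Y d" and cs: "comb_similar X \<Phi> Y d"
    using sim unfolding sim_to_Q_ultrametric_def by auto
  have Yne: "Y \<noteq> {}" and sym: "\<forall>x\<in>Y. \<forall>y\<in>Y. d x y = d y x" and inQ: "\<forall>x\<in>Y. \<forall>y\<in>Y. d x y \<in> Q"
    and dz: "\<forall>z\<in>Y. d z z = q0"
    and sp: "\<forall>z1\<in>Y. \<forall>z2\<in>Y. \<forall>z3\<in>Y. some_perm (\<lambda>a b c. (d a c, d a b) \<in> le \<and> d a b = d b c) z1 z2 z3"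
    and zero: "\<forall>x\<in>Y. \<forall>y\<in>Y. d x y = q0 \<longleftrightarrow> x = y"
    using um unfolding is_ultrametric_def is_pseudoultrametric_def by auto
  from cs obtain f g where f: "bij_betw f (img2 X \<Phi>) (img2 Y d)" and g: "bij_betw g Y X"
    and fg: "\<forall>x\<in>Y. \<forall>y\<in>Y. d x y = f (\<Phi> (g x) (g y))"
    unfolding comb_similar_def by blast
  define h where "h = inv_into Y g"
  have hY: "\<And>a. a \<in> X \<Longrightarrow> h a \<in> Y" using g unfolding h_def
    by (metis bij_betw_def inv_into_into)
  have gh: "\<And>a. a \<in> X \<Longrightarrow> g (h a) = a" using g unfolding h_def
    by (metis bij_betw_def f_inv_into_f)
  have K: "f (\<Phi> a b) = d (h a) (h b)" if ab: "a \<in> X" "b \<in> X" for a b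
  proof -
    have "d (h a) (h b) = f (\<Phi> (g (h a)) (g (h b)))" using fg hY[OF ab(1)] hY[OF ab(2)] by blast
    then show ?thesis using gh[OF ab(1)] gh[OF ab(2)] by simp
  qed
  have finj: "inj_on f (img2 X \<Phi>)" using f bij_betw_def by blast
  have hinj: "\<And>a b. a \<in> X \<Longrightarrow> b \<in> X \<Longrightarrow> h a = h b \<Longrightarrow> a = b" using gh by metis
  have feq: "(\<Phi> a b = \<Phi> c e) \<longleftrightarrow> d (h a) (h b) = d (h c) (h e)"
    if abce: "a\<in>X" "b\<in>X" "c\<in>X" "e\<in>X" for a b c e
  proof -
    have i: "\<Phi> a b \<in> img2 X \<Phi>" "\<Phi> c e \<in> img2 X \<Phi>" using abce by (auto intro: img2I)
    have "\<Phi> a b = \<Phi> c e \<longleftrightarrow> f (\<Phi> a b) = f (\<Phi> c e)" using inj_on_eq_iff[OF finj i] by simp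
    then show ?thesis using K abce by simp
  qed
  have c1: "\<forall>x\<in>X. \<forall>y\<in>X. \<Phi> x y = \<Phi> y x"
  proof (intro ballI)
    fix x y assume xy: "x \<in> X" "y \<in> X"
    have "d (h x) (h y) = d (h y) (h x)" using sym hY[OF xy(1)] hY[OF xy(2)] by blast
    then show "\<Phi> x y = \<Phi> y x" using feq[OF xy(1) xy(2) xy(2) xy(1)] by blast
  qed
  obtain y where yY: "y \<in> Y" using Yne by blast
  define a0 where "a0 = \<Phi> (g y) (g y)"
  have gyX: "g y \<in> X" using g yY unfolding bij_betw_def by blast
  have a0i: "a0 \<in> img2 X \<Phi>" unfolding a0_def using gyX by (intro img2I)
  have diag: "\<Phi> a b = a0 \<longleftrightarrow> a = b" if ab: "a \<in> X" "b \<in> X" for a b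
  proof
    assume "\<Phi> a b = a0"
    then have "d (h a) (h b) = d (h (g y)) (h (g y))" using feq[OF ab gyX gyX] unfolding a0_def by blast
    moreover have "d (h (g y)) (h (g y)) = q0" using dz hY[OF gyX] by blast
    ultimately have "d (h a) (h b) = q0" by simp
    then show "a = b" using zero hY[OF ab(1)] hY[OF ab(2)] hinj[OF ab] by blast
  next
    assume "a = b"
    moreover have "d (h (g y)) (h (g y)) = q0" using dz hY[OF gyX] by blast
    moreover have "d (h a) (h a) = q0" using dz hY[OF ab(1)] by blast
    ultimately show "\<Phi> a b = a0" unfolding a0_def using feq[OF ab gyX gyX] by simp
  qed
  have "preimage_is_diag X \<Phi> a0"
    unfolding preimage_is_diag_def Id_on_def using diag by auto
  then have c3: "\<exists>a0\<in>img2 X \<Phi>. preimage_is_diag X \<Phi> a0" using a0i by blast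
  have c4: "\<forall>x1\<in>X. \<forall>x2\<in>X. \<forall>x3\<in>X. some_perm (\<lambda>a b c. \<Phi> a b = \<Phi> b c) x1 x2 x3"
  proof (intro ballI)
    fix x1 x2 x3 assume x: "x1 \<in> X" "x2 \<in> X" "x3 \<in> X"
    have "some_perm (\<lambda>a b c. (d a c, d a b) \<in> le \<and> d a b = d b c) (h x1) (h x2) (h x3)"
      using sp hY x by blast
    then show "some_perm (\<lambda>a b c. \<Phi> a b = \<Phi> b c) x1 x2 x3"
    proof (rule some_perm_map)
      fix a b c assume abc: "a\<in>{x1,x2,x3}" "b\<in>{x1,x2,x3}" "c\<in>{x1,x2,x3}"
        and e: "(d (h a) (h c), d (h a) (h b)) \<in> le \<and> d (h a) (h b) = d (h b) (h c)"
      have X: "a \<in> X" "b \<in> X" "c \<in> X" using abc x by auto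
      show "\<Phi> a b = \<Phi> b c" using feq[OF X(1) X(2) X(2) X(3)] e by simp
    qed
  qed
  have rl: "refl_on Q le" and tl: "trans le" and al: "antisym le"
    using partial_order_onD[OF po] by auto
  have U: "(f p, f q) \<in> le" if "(p, q) \<in> u_rel X \<Phi>" for p q
  proof -
    from that obtain x1 x2 x3 where x: "x1\<in>X" "x2\<in>X" "x3\<in>X" and
      pq: "p = \<Phi> x1 x3" "q = \<Phi> x1 x2" "q = \<Phi> x2 x3"
      unfolding u_rel_def by blast
    have "d (h x1) (h x2) = d (h x2) (h x3)" using feq[OF x(1) x(2) x(2) x(3)] pq by simp
    then have "(d (h x1) (h x3), d (h x1) (h x2)) \<in> le"
      using ultra_iso[OF um rl] hY x by blast
    then show ?thesis using K[OF x(1) x(3)] K[OF x(1) x(2)] pq by simp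
  qed
  have UT: "(f p, f q) \<in> le" if "(p, q) \<in> (u_rel X \<Phi>)\<^sup>+" for p q
    using that
  proof (induction rule: trancl_induct)
    case (base y) then show ?case using U by blast
  next
    case (step y z) then show ?case using U tl by (meson transD)
  qed
  have sub: "(u_rel X \<Phi>)\<^sup>+ \<subseteq> img2 X \<Phi> \<times> img2 X \<Phi>"
    by (rule trancl_subset_Sigma[OF u_rel_sub])
  have c2: "antisym ((u_rel X \<Phi>)\<^sup>+)"
  proof (rule antisymI)
    fix p q assume pq: "(p,q) \<in> (u_rel X \<Phi>)\<^sup>+" "(q,p) \<in> (u_rel X \<Phi>)\<^sup>+"
    have "(f p, f q) \<in> le" "(f q, f p) \<in> le" using UT pq by blast+
    then have "f p = f q" using antisymD[OF al] by blast
    moreover have "p \<in> img2 X \<Phi>" "q \<in> img2 X \<Phi>" using sub pq(1) by blast+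
    ultimately show "p = q" using inj_onD[OF finj] by blast
  qed
  show ?thesis unfolding cond_iii_def using c1 c2 c3 c4 by blast
qed

lemma iii_iv_facts:
  assumes "cond_iii X \<Phi>"
  shows "\<exists>b0\<in>img2 X \<Phi>. preimage_is_diag X \<Phi> b0 \<and>
        partial_order_on (img2 X \<Phi>) (le_Phi X \<Phi>) \<and>
        (\<forall>y\<in>img2 X \<Phi>. (b0, y) \<in> le_Phi X \<Phi>) \<and>
        is_pseudoultrametric (img2 X \<Phi>) (le_Phi X \<Phi>) b0 X \<Phi> \<and>
        (\<forall>x\<in>X. \<forall>y\<in>X. \<Phi> x y = b0 \<longleftrightarrow> x = y)"
proof -
  have sym: "\<forall>x\<in>X. \<forall>y\<in>X. \<Phi> x y = \<Phi> y x" and an: "antisym ((u_rel X \<Phi>)\<^sup>+)"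
    and tr: "\<forall>x1\<in>X. \<forall>x2\<in>X. \<forall>x3\<in>X. some_perm (\<lambda>a b c. \<Phi> a b = \<Phi> b c) x1 x2 x3"
    using assms unfolding cond_iii_def by auto
  from assms obtain a0 where a0: "a0 \<in> img2 X \<Phi>" "preimage_is_diag X \<Phi> a0"
    unfolding cond_iii_def by blast
  have dg: "\<Phi> x y = a0 \<longleftrightarrow> x = y" if xy: "x \<in> X" "y \<in> X" for x y
  proof -
    have "(x,y) \<in> {(x, y). x \<in> X \<and> y \<in> X \<and> \<Phi> x y = a0} \<longleftrightarrow> (x,y) \<in> Id_on X"
      using a0(2) unfolding preimage_is_diag_def by simp
    then show ?thesis using xy by (auto simp: Id_on_def)
  qed
  have sub: "(u_rel X \<Phi>)\<^sup>+ \<subseteq> img2 X \<Phi> \<times> img2 X \<Phi>"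
    by (rule trancl_subset_Sigma[OF u_rel_sub])
  have po: "partial_order_on (img2 X \<Phi>) (le_Phi X \<Phi>)"
    unfolding partial_order_on_def preorder_on_def le_Phi_def
  proof (intro conjI)
    show "(u_rel X \<Phi>)\<^sup>+ \<union> Id_on (img2 X \<Phi>) \<subseteq> img2 X \<Phi> \<times> img2 X \<Phi>" using sub by auto
    show "refl_on (img2 X \<Phi>) ((u_rel X \<Phi>)\<^sup>+ \<union> Id_on (img2 X \<Phi>))" by (auto simp: refl_on_def)
    show "trans ((u_rel X \<Phi>)\<^sup>+ \<union> Id_on (img2 X \<Phi>))"
      unfolding trans_def by (blast intro: trancl_trans)
    show "antisym ((u_rel X \<Phi>)\<^sup>+ \<union> Id_on (img2 X \<Phi>))"
      using an unfolding antisym_def by (auto simp: Id_on_def)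
  qed
  have uin: "(p,q) \<in> u_rel X \<Phi> \<Longrightarrow> (p,q) \<in> le_Phi X \<Phi>" for p q
    unfolding le_Phi_def by auto
  have small: "\<forall>y\<in>img2 X \<Phi>. (a0, y) \<in> le_Phi X \<Phi>"
  proof
    fix y assume yi: "y \<in> img2 X \<Phi>"
    then obtain x z where xz: "x \<in> X" "z \<in> X" "y = \<Phi> x z" by (rule img2E)
    show "(a0, y) \<in> le_Phi X \<Phi>"
    proof (cases "x = z")
      case True then have "y = a0" using dg xz by blast
      then show ?thesis using yi unfolding le_Phi_def by auto
    next
      case False
      have "(a0, y) \<in> u_rel X \<Phi>" unfolding u_rel_def
        using xz a0(1) yi dg[of x x] sym by blast
      then show ?thesis by (rule uin)
    qed
  qed
  have "X \<noteq> {}" using a0(1) unfolding img2_def by auto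
  then have pu: "is_pseudoultrametric (img2 X \<Phi>) (le_Phi X \<Phi>) a0 X \<Phi>"
    unfolding is_pseudoultrametric_def
  proof (intro conjI ballI)
    fix x y assume "x \<in> X" "y \<in> X" then show "\<Phi> x y \<in> img2 X \<Phi>" by (rule img2I)
  next
    fix x y assume "x \<in> X" "y \<in> X" then show "\<Phi> x y = \<Phi> y x" using sym by blast
  next
    fix z assume "z \<in> X" then show "\<Phi> z z = a0" using dg by blast
  next
    fix z1 z2 z3 assume z: "z1 \<in> X" "z2 \<in> X" "z3 \<in> X"
    have "some_perm (\<lambda>a b c. \<Phi> a b = \<Phi> b c) z1 z2 z3" using tr z by blast
    then show "some_perm (\<lambda>a b c. (\<Phi> a c, \<Phi> a b) \<in> le_Phi X \<Phi> \<and> \<Phi> a b = \<Phi> b c) z1 z2 z3"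
    proof (rule some_perm_mono)
      fix a b c assume abc: "a \<in> {z1,z2,z3}" "b \<in> {z1,z2,z3}" "c \<in> {z1,z2,z3}" "\<Phi> a b = \<Phi> b c"
      then have "(\<Phi> a c, \<Phi> a b) \<in> u_rel X \<Phi>" unfolding u_rel_def
        using z img2I[of _ X _ \<Phi>] by blast
      then show "(\<Phi> a c, \<Phi> a b) \<in> le_Phi X \<Phi> \<and> \<Phi> a b = \<Phi> b c" using uin abc by blast
    qed
  qed
  show ?thesis using a0 po small pu dg by blast
qed

lemma iii_iv: "cond_iii X \<Phi> \<Longrightarrow> cond_iv X \<Phi>"
  using iii_iv_facts[of X \<Phi>] unfolding cond_iv_def is_ultrametric_def by blast

lemma iv_iii: assumes "cond_iv X \<Phi>" shows "cond_iii X \<Phi>"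
proof -
  from assms obtain b0 where b0: "b0 \<in> img2 X \<Phi>" "preimage_is_diag X \<Phi> b0"
    and po: "partial_order_on (img2 X \<Phi>) (le_Phi X \<Phi>)"
    and um: "is_ultrametric (img2 X \<Phi>) (le_Phi X \<Phi>) b0 X \<Phi>"
    unfolding cond_iv_def by blast
  have sym: "\<forall>x\<in>X. \<forall>y\<in>X. \<Phi> x y = \<Phi> y x"
    and sp: "\<forall>z1\<in>X. \<forall>z2\<in>X. \<forall>z3\<in>X. some_perm (\<lambda>a b c. (\<Phi> a c, \<Phi> a b) \<in> le_Phi X \<Phi> \<and> \<Phi> a b = \<Phi> b c) z1 z2 z3"
    using um unfolding is_ultrametric_def is_pseudoultrametric_def by auto
  have an: "antisym ((u_rel X \<Phi>)\<^sup>+)"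
    using antisym_subset[of "(u_rel X \<Phi>)\<^sup>+" "le_Phi X \<Phi>"] partial_order_onD(3)[OF po]
    unfolding le_Phi_def by blast
  have tr: "\<forall>x1\<in>X. \<forall>x2\<in>X. \<forall>x3\<in>X. some_perm (\<lambda>a b c. \<Phi> a b = \<Phi> b c) x1 x2 x3"
  proof (intro ballI)
    fix x1 x2 x3 assume "x1 \<in> X" "x2 \<in> X" "x3 \<in> X"
    then have "some_perm (\<lambda>a b c. (\<Phi> a c, \<Phi> a b) \<in> le_Phi X \<Phi> \<and> \<Phi> a b = \<Phi> b c) x1 x2 x3"
      using sp by blast
    then show "some_perm (\<lambda>a b c. \<Phi> a b = \<Phi> b c) x1 x2 x3" by (rule some_perm_mono) blast
  qed
  show ?thesis unfolding cond_iii_def using sym an b0 tr by blast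
qed

lemma iii_i:
  assumes "cond_iii X \<Phi>"
  shows "\<exists>(Q::'b set) le q0 (Y::'a set) d.
              linear_order_on Q le \<and> sim_to_Q_ultrametric X (\<Phi>::'a\<Rightarrow>'a\<Rightarrow>'b) Q le q0 Y d"
proof -
  from iii_iv_facts[OF assms] obtain b0 where b0: "b0 \<in> img2 X \<Phi>"
    and po: "partial_order_on (img2 X \<Phi>) (le_Phi X \<Phi>)"
    and small: "\<forall>y\<in>img2 X \<Phi>. (b0, y) \<in> le_Phi X \<Phi>"
    and pu: "is_pseudoultrametric (img2 X \<Phi>) (le_Phi X \<Phi>) b0 X \<Phi>"
    and dg: "\<forall>x\<in>X. \<forall>y\<in>X. \<Phi> x y = b0 \<longleftrightarrow> x = y" by blast
  from szpilrajn[OF po] obtain L where L: "linear_order_on (img2 X \<Phi>) L" "le_Phi X \<Phi> \<subseteq> L"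
    by blast
  have pu': "is_pseudoultrametric (img2 X \<Phi>) L b0 X \<Phi>"
    using pu L(2) unfolding is_pseudoultrametric_def
  proof (elim conjE, intro conjI ballI)
    fix z1 z2 z3 assume z: "z1 \<in> X" "z2 \<in> X" "z3 \<in> X"
      and sp: "\<forall>z1\<in>X. \<forall>z2\<in>X. \<forall>z3\<in>X. some_perm (\<lambda>a b c. (\<Phi> a c, \<Phi> a b) \<in> le_Phi X \<Phi> \<and> \<Phi> a b = \<Phi> b c) z1 z2 z3"
    have "some_perm (\<lambda>a b c. (\<Phi> a c, \<Phi> a b) \<in> le_Phi X \<Phi> \<and> \<Phi> a b = \<Phi> b c) z1 z2 z3"
      using sp z by blast
    then show "some_perm (\<lambda>a b c. (\<Phi> a c, \<Phi> a b) \<in> L \<and> \<Phi> a b = \<Phi> b c) z1 z2 z3"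
      by (rule some_perm_mono) (use L(2) in blast)
  qed auto
  have cs: "comb_similar X \<Phi> X \<Phi>" unfolding comb_similar_def
    by (rule exI[of _ id], rule exI[of _ id]) auto
  have "sim_to_Q_ultrametric X \<Phi> (img2 X \<Phi>) L b0 X \<Phi>"
    unfolding sim_to_Q_ultrametric_def is_ultrametric_def
    using b0 small L(2) pu' dg cs by blast
  then show ?thesis using L(1) by blast
qed

theorem corollary3p19:
  fixes X :: "'a set" and \<Phi> :: "'a \<Rightarrow> 'a \<Rightarrow> 'b"
  assumes "X \<noteq> {}"
  shows "((\<exists>(Q::'b set) le q0 (Y::'a set) d.
              linear_order_on Q le \<and> sim_to_Q_ultrametric X \<Phi> Q le q0 Y d)
          \<longleftrightarrow> (\<exists>(Q::'b set) le q0 (Y::'a set) d.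
              partial_order_on Q le \<and> sim_to_Q_ultrametric X \<Phi> Q le q0 Y d))
       \<and> ((\<exists>(Q::'b set) le q0 (Y::'a set) d.
              partial_order_on Q le \<and> sim_to_Q_ultrametric X \<Phi> Q le q0 Y d)
          \<longleftrightarrow> cond_iii X \<Phi>)
       \<and> (cond_iii X \<Phi> \<longleftrightarrow> cond_iv X \<Phi>)
       \<and> ((\<exists>(Q::'c set) le q0 (Y::'d set) d.
              partial_order_on Q le \<and> sim_to_Q_ultrametric X \<Phi> Q le q0 Y d)
          \<longrightarrow> cond_iii X \<Phi>)"
proof -
  have A: "\<And>(Q::'b set) le q0 (Y::'a set) d. partial_order_on Q le \<Longrightarrow>
      sim_to_Q_ultrametric X \<Phi> Q le q0 Y d \<Longrightarrow> cond_iii X \<Phi>" by (rule ii_iii)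
  have B: "\<And>(Q::'c set) le q0 (Y::'d set) d. partial_order_on Q le \<Longrightarrow>
      sim_to_Q_ultrametric X \<Phi> Q le q0 Y d \<Longrightarrow> cond_iii X \<Phi>" by (rule ii_iii)
  have C: "cond_iii X \<Phi> \<Longrightarrow> \<exists>(Q::'b set) le q0 (Y::'a set) d.
              linear_order_on Q le \<and> sim_to_Q_ultrametric X \<Phi> Q le q0 Y d" by (rule iii_i)
  show ?thesis
    using A B C iii_iv[of X \<Phi>] iv_iii[of X \<Phi>] unfolding linear_order_on_def by blast
qed

end
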